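(* Let $E$ be a congruence on $\overline{\boldsymbol{T}(X_1,\ldots,X_n)}$ and $F$ a congruence on $\overline{\boldsymbol{T}(Y_1,\ldots,Y_m)}$. Put $V:=\boldsymbol{V}(E)\subset\mathbb{R}^n$ and $W:=\boldsymbol{V}(F)\subset\mathbb{R}^m$. Let $\pi_E:\overline{\boldsymbol{T}(X_1,\ldots,X_n)}\twoheadrightarrow\overline{\boldsymbol{T}(X_1,\ldots,X_n)}/E$ be the natural surjective $\boldsymbol{T}$-algebra homomorphism. Let $\psi:\overline{\boldsymbol{T}(X_1,\ldots,X_n)}/E\to\overline{\boldsymbol{T}(Y_1,\ldots,Y_m)}/F$ be a $\boldsymbol{T}$-algebra homomorphism, and define $$\theta:W\to\boldsymbol{T}^n,\quad y\mapsto\big(\psi(\pi_E(X_1))(y),\ldots,\psi(\pi_E(X_n))(y)\big).$$ Then: (1) for every $f\in\overline{\boldsymbol{T}(X_1,\ldots,X_n)}$ and every $y\in W$, $\psi(\pi_E(f))(y)=\pi_E(f)(\theta(y))=f(\theta(y))$; (2) $\operatorname{Im}(\theta)\subset V$; (3) $\theta$ is continuous; (4) if $\psi$ is surjective, then $\theta$ is a closed embedding; (5) if $\psi$ is injective, $F=\boldsymbol{E}(W)$ and $\operatorname{Im}(\theta)$ is closed, then $\operatorname{Im}(\theta)\supset V$; (6) if $\psi$ is an isomorphism and $F=\boldsymbol{E}(W)$, then $V$ and $W$ are homeomorphic via $\theta$.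
   Context: $\boldsymbol{T}=\mathbb{R}\cup\{-\infty\}$ is the tropical semifield with $a\oplus b=\max\{a,b\}$ and $a\odot b=a+b$. Semirings are commutative with additive neutral element $0$ (absorbing) and multiplicative identity $1$; a semifield is a semiring with $0\neq1$ in which every nonzero element is multiplicatively invertible. A $\boldsymbol{T}$-algebra is a semiring $S$ together with a semiring homomorphism $\boldsymbol{T}\to S$; a $\boldsymbol{T}$-algebra homomorphism is a semiring homomorphism compatible with these structure maps. $\boldsymbol{T}[X_1,\ldots,X_n]$ is the tropical polynomial semiring; $\overline{\boldsymbol{T}[X_1,\ldots,X_n]}$ is its quotient by the congruence identifying two tropical polynomials that define the same function $\boldsymbol{T}^n\to\boldsymbol{T}$ (the tropical polynomial function semiring). This quotient is cancellative, and $\overline{\boldsymbol{T}(X_1,\ldots,X_n)}$ denotes its semifield of fractions (the tropical rational function semifield); $X_i$ also denotes the image of the variable $X_i$ there. Every element $f=g/h$ ($h\neq-\infty$) defines a function $\mathbb{R}^n\to\boldsymbol{T}$, $x\mapsto g(x)-h(x)$; the element $-\infty$ is the constant function $-\infty$ and all other elements are real-valued on $\mathbb{R}^n$. A congruence on a semiring $S$ is an equivalence relation $E\subset S\times S$ such that $(x,y),(z,w)\in E$ imply $(x+z,y+w)\in E$ and $(xz,yw)\in E$; $S/E$ is the quotient semiring. For a congruence $E$ on $\overline{\boldsymbol{T}(X_1,\ldots,X_n)}$, the congruence variety is $\boldsymbol{V}(E)=\{x\in\mathbb{R}^n\mid f(x)=g(x)\ \forall (f,g)\in E\}$. For $V\subset\mathbb{R}^n$,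 $\boldsymbol{E}(V)=\{(f,g)\mid f(x)=g(x)\ \forall x\in V\}$, a congruence on $\overline{\boldsymbol{T}(X_1,\ldots,X_n)}$. For $x\in\boldsymbol{V}(E)$ an element $\pi_E(f)$ of the quotient is evaluated by $\pi_E(f)(x):=f(x)$ (well defined). $\mathbb{R}^n$, $\boldsymbol{T}^n$ carry the Euclidean topology. *)

theory Defs
  imports "HOL-Analysis.Analysis" "HOL-Library.Extended_Real"
begin

definition TT :: "ereal set" where
  "TT = {c. c \<noteq> \<infinity>}"

text \<open>Tropical polynomial (finite set of terms (exponent vector, real coefficient)),
  evaluated as a function on R^n; only nonempty term sets are used.\<close>
definition tpoly :: "(('n::finite \<Rightarrow> nat) \<times> real) set \<Rightarrow> real^'n \<Rightarrow> real" where
  "tpoly P x = Max ((\<lambda>(a, c). c + (\<Sum>i\<in>UNIV. real (a i) * x $ i)) ` P)"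

text \<open>The tropical rational function semifield, each element identified with the
  function it defines on R^n (the constant -\<infinity> or a difference of two tropical
  polynomial functions).\<close>
definition trop_rat :: "(real^'n::finite \<Rightarrow> ereal) set" where
  "trop_rat = {\<lambda>x. -\<infinity>} \<union>
     {\<lambda>x. ereal (tpoly P x - tpoly Q x) | P Q. finite P \<and> P \<noteq> {} \<and> finite Q \<and> Q \<noteq> {}}"

definition tplus :: "('a \<Rightarrow> ereal) \<Rightarrow> ('a \<Rightarrow> ereal) \<Rightarrow> 'a \<Rightarrow> ereal" where
  "tplus f g = (\<lambda>x. max (f x) (g x))"

definition ttimes :: "('a \<Rightarrow> ereal) \<Rightarrow> ('a \<Rightarrow> ereal) \<Rightarrow> 'a \<Rightarrow> ereal" where
  "ttimes f g = (\<lambda>x. f x + g x)"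

definition tconst :: "ereal \<Rightarrow> 'a \<Rightarrow> ereal" where
  "tconst c = (\<lambda>x. c)"

definition Xvar :: "'n::finite \<Rightarrow> real^'n \<Rightarrow> ereal" where
  "Xvar i = (\<lambda>x. ereal (x $ i))"

definition trop_congruence :: "(real^'n::finite \<Rightarrow> ereal) rel \<Rightarrow> bool" where
  "trop_congruence E \<longleftrightarrow> equiv trop_rat E \<and>
     (\<forall>(f, g)\<in>E. \<forall>(h, k)\<in>E. (tplus f h, tplus g k) \<in> E \<and> (ttimes f h, ttimes g k) \<in> E)"

definition cvar :: "(real^'n::finite \<Rightarrow> ereal) rel \<Rightarrow> (real^'n) set" where
  "cvar E = {x. \<forall>(f, g)\<in>E. f x = g x}"

definition cong_of :: "(real^'n::finite) set \<Rightarrow> (real^'n \<Rightarrow> ereal) rel" where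
  "cong_of W = {(f, g). f \<in> trop_rat \<and> g \<in> trop_rat \<and> (\<forall>x\<in>W. f x = g x)}"

text \<open>Evaluation of a class (element of the quotient) at a point of the variety.\<close>
definition class_eval :: "('a \<Rightarrow> ereal) set \<Rightarrow> 'a \<Rightarrow> ereal" where
  "class_eval A y = (SOME f. f \<in> A) y"

text \<open>T-algebra homomorphism between quotients trop_rat // E and trop_rat // F
  (elements of the quotient are equivalence classes; pi_E f = E `` {f}).\<close>
definition talg_hom ::
  "(real^'n::finite \<Rightarrow> ereal) rel \<Rightarrow> (real^'m::finite \<Rightarrow> ereal) rel
   \<Rightarrow> ((real^'n \<Rightarrow> ereal) set \<Rightarrow> (real^'m \<Rightarrow> ereal) set) \<Rightarrow> bool" where
  "talg_hom E F \<psi> \<longleftrightarrow>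
     (\<forall>A\<in>trop_rat // E. \<psi> A \<in> trop_rat // F) \<and>
     (\<forall>c\<in>TT. \<psi> (E `` {tconst c}) = F `` {tconst c}) \<and>
     (\<forall>f\<in>trop_rat. \<forall>g\<in>trop_rat. \<forall>u\<in>\<psi> (E `` {f}). \<forall>v\<in>\<psi> (E `` {g}).
        \<psi> (E `` {tplus f g}) = F `` {tplus u v} \<and>
        \<psi> (E `` {ttimes f g}) = F `` {ttimes u v})"

definition ttheta ::
  "(real^'n::finite \<Rightarrow> ereal) rel \<Rightarrow> ((real^'n \<Rightarrow> ereal) set \<Rightarrow> (real^'m::finite \<Rightarrow> ereal) set)
   \<Rightarrow> real^'m \<Rightarrow> ereal^'n" where
  "ttheta E \<psi> y = (\<chi> i. class_eval (\<psi> (E `` {Xvar i})) y)"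

definition temb :: "real^'n::finite \<Rightarrow> ereal^'n" where
  "temb x = (\<chi> i. ereal (x $ i))"

text \<open>Inverse on the real part (used to evaluate f at theta(y), which lies in R^n).\<close>
definition treal :: "ereal^'n::finite \<Rightarrow> real^'n" where
  "treal z = (\<chi> i. real_of_ereal (z $ i))"

end

theory Submission
  imports Defs
begin

lemma cong_sub: "trop_congruence E \<Longrightarrow> E \<subseteq> trop_rat \<times> trop_rat"
  unfolding trop_congruence_def equiv_def refl_on_def by blast

lemma cong_refl: "trop_congruence E \<Longrightarrow> f \<in> trop_rat \<Longrightarrow> (f, f) \<in> E"
  unfolding trop_congruence_def equiv_def refl_on_def by blast

lemma tplus_rat:
  fixes E :: "(real^'n::finite \<Rightarrow> ereal) rel"
  assumes E: "trop_congruence E" and f: "f \<in> trop_rat" and g: "g \<in> trop_rat"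
  shows "tplus f g \<in> (trop_rat :: (real^'n \<Rightarrow> ereal) set)"
proof -
  have "(f,f) \<in> E" "(g,g) \<in> E" using cong_refl[OF E] f g by auto
  then have "(tplus f g, tplus f g) \<in> E" using E unfolding trop_congruence_def by fast
  then show ?thesis using cong_sub[OF E] by blast
qed

lemma ttimes_rat:
  fixes E :: "(real^'n::finite \<Rightarrow> ereal) rel"
  assumes E: "trop_congruence E" and f: "f \<in> trop_rat" and g: "g \<in> trop_rat"
  shows "ttimes f g \<in> (trop_rat :: (real^'n \<Rightarrow> ereal) set)"
proof -
  have "(f,f) \<in> E" "(g,g) \<in> E" using cong_refl[OF E] f g by auto
  then have "(ttimes f g, ttimes f g) \<in> E" using E unfolding trop_congruence_def by fast
  then show ?thesis using cong_sub[OF E] by blast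
qed

lemma class_eval_eq:
  assumes F: "trop_congruence F" and A: "A \<in> trop_rat // F" and u: "u \<in> A" and y: "y \<in> cvar F"
  shows "class_eval A y = u y"
proof -
  have eq: "equiv trop_rat F" using F unfolding trop_congruence_def by blast
  obtain a where a: "A = F``{a}" "a \<in> trop_rat" using A by (rule quotientE)
  have v: "(SOME v. v \<in> A) \<in> A" using u by (metis someI)
  have "((SOME v. v \<in> A), u) \<in> F"
    using v u a eq unfolding equiv_def sym_def trans_def by blast
  then show ?thesis using y unfolding cvar_def class_eval_def by blast
qed

definition tterm :: "(('n::finite \<Rightarrow> nat) \<times> real) \<Rightarrow> real^'n \<Rightarrow> real" where
  "tterm p x = (case p of (a, c) \<Rightarrow> c + (\<Sum>i\<in>UNIV. real (a i) * x $ i))"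

lemma tpoly_alt: "tpoly P x = Max ((\<lambda>p. tterm p x) ` P)"
  by (simp add: tpoly_def tterm_def)

lemma tpoly_single: "tpoly {p} x = tterm p x"
  by (simp add: tpoly_alt)

lemma tpoly_insert: "finite P \<Longrightarrow> P \<noteq> {} \<Longrightarrow> tpoly (insert p P) x = max (tterm p x) (tpoly P x)"
  by (simp add: tpoly_alt)

lemma cont_tterm: "continuous_on UNIV (tterm p)"
  unfolding tterm_def by (cases p) (auto intro!: continuous_intros)

lemma cont_tpoly: "finite P \<Longrightarrow> P \<noteq> {} \<Longrightarrow> continuous_on UNIV (tpoly P)"
proof (induction P rule: finite_ne_induct)
  case (singleton x)
  then show ?case using cont_tterm by (simp add: tpoly_single[abs_def])
next
  case (insert x F)
  have "tpoly (insert x F) = (\<lambda>z. max (tterm x z) (tpoly F z))"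
    using insert by (simp add: tpoly_insert fun_eq_iff)
  then show ?case using insert by (simp add: continuous_on_max cont_tterm)
qed

lemma rat_cases:
  assumes "f \<in> trop_rat"
  obtains "f = (\<lambda>x. -\<infinity>)"
  | P Q where "finite P" "P \<noteq> {}" "finite Q" "Q \<noteq> {}" "f = (\<lambda>x. ereal (tpoly P x - tpoly Q x))"
  using assms unfolding trop_rat_def by blast

lemma cont_rat: "f \<in> trop_rat \<Longrightarrow> continuous_on UNIV f"
  by (erule rat_cases) (auto intro!: continuous_intros cont_tpoly)

lemma cont_rat_real: "f \<in> trop_rat \<Longrightarrow> continuous_on UNIV (\<lambda>x. real_of_ereal (f x))"
  by (erule rat_cases) (auto intro!: continuous_intros cont_tpoly)

lemma const_rat: "c \<in> TT \<Longrightarrow> tconst c \<in> trop_rat"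
proof -
  assume "c \<in> TT"
  then consider "c = -\<infinity>" | r where "c = ereal r" unfolding TT_def by (cases c) auto
  then show ?thesis
  proof cases
    case 1 then show ?thesis by (simp add: trop_rat_def tconst_def)
  next
    case 2
    have "tconst c = (\<lambda>x. ereal (tpoly {(\<lambda>_. 0, r)} x - tpoly {(\<lambda>_. 0, 0)} x))"
      by (simp add: 2 tconst_def tpoly_single tterm_def)
    then show ?thesis unfolding trop_rat_def by blast
  qed
qed

lemma sum_delta_vec: "(\<Sum>j\<in>UNIV. real (if j = i then 1 else 0) * (x::real^'n::finite) $ j) = x $ i"
proof -
  have "\<And>j. real (if j = i then 1 else 0) * x $ j = (if j = i then x $ j else 0)" by simp
  then show ?thesis by simp
qed

lemma Xvar_rat: "Xvar i \<in> trop_rat"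
proof -
  have "Xvar i = (\<lambda>x. ereal (tpoly {(\<lambda>j. if j = i then 1 else 0, 0)} x - tpoly {(\<lambda>_. 0, 0)} x))"
    by (simp add: Xvar_def tpoly_single tterm_def sum_delta_vec)
  then show ?thesis unfolding trop_rat_def by blast
qed

lemma Xinv_rat: "(\<lambda>x. ereal (- x $ i)) \<in> trop_rat"
proof -
  have "(\<lambda>x. ereal (- x $ i)) = (\<lambda>x. ereal (tpoly {(\<lambda>_. 0, 0)} x - tpoly {(\<lambda>j. if j = i then 1 else 0, 0)} x))"
    by (simp add: tpoly_single tterm_def sum_delta_vec)
  then show ?thesis unfolding trop_rat_def by blast
qed

lemma closed_cvar:
  assumes E: "trop_congruence E" shows "closed (cvar E)"
proof -
  have "cvar E = (\<Inter>p\<in>E. {x. fst p x = snd p x})" unfolding cvar_def by (auto simp: case_prod_beta)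
  moreover have "closed {x. fst p x = snd p x}" if "p \<in> E" for p
    using cong_sub[OF E] that by (intro closed_Collect_eq cont_rat) auto
  ultimately show ?thesis by auto
qed

lemma cont_temb: "continuous_on UNIV temb"
  unfolding temb_def 
  apply (rule continuous_on_vec_lambda)
  apply (rule continuous_on_ereal)
  apply (rule continuous_on_component)
  apply (rule continuous_on_id)
  done

lemma cont_treal: "continuous_on (range temb) treal"
  unfolding treal_def
proof (rule continuous_on_vec_lambda)
  fix i
  show "continuous_on (range temb) (\<lambda>x. real_of_ereal (x $ i))"
    apply (rule continuous_on_compose2[OF continuous_on_real])
     apply (rule continuous_on_component)
     apply (rule continuous_on_id)
    apply (auto simp: temb_def)
    done
qed

lemma treal_temb[simp]: "treal (temb x) = x"
  by (simp add: treal_def temb_def vec_eq_iff)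

lemma inj_temb: "inj temb"
  by (metis injI treal_temb)

lemma homeo_temb: "homeomorphism UNIV (range temb) temb treal"
  unfolding homeomorphism_def
proof (intro conjI ballI cont_temb cont_treal)
  show "temb ` UNIV = range temb" by simp
  have "treal ` range temb = range (treal \<circ> temb)" by (simp add: image_comp)
  then show "treal ` range temb = UNIV" by (simp add: o_def)
  show "treal (temb x) = x" for x by simp
  show "temb (treal y) = y" if "y \<in> range temb" for y using that by auto
qed

lemma closed_temb: "closed C \<Longrightarrow> closedin (top_of_set (range temb)) (temb ` C)"
  by (rule homeomorphism_imp_closed_map[OF homeo_temb]) simp

lemma temb_closed: "closedin (top_of_set (range temb)) (temb ` C) \<Longrightarrow> closed C"
proof -
  assume a: "closedin (top_of_set (range temb)) (temb ` C)"
  have "\<forall>T. closedin (top_of_set (temb ` UNIV)) T \<longrightarrow> closedin (top_of_set UNIV) (UNIV \<inter> temb -` T)"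
    using cont_temb by (simp only: continuous_on_closed)
  then have "closedin (top_of_set UNIV) (UNIV \<inter> temb -` (temb ` C))"
    using a by blast
  moreover have "temb -` (temb ` C) = C" by (rule inj_vimage_image_eq[OF inj_temb])
  ultimately show ?thesis by (metis closed_closedin subtopology_UNIV Int_UNIV_left)
qed

lemma abs_rat:
  fixes E :: "(real^'n::finite \<Rightarrow> ereal) rel"
  assumes E: "trop_congruence E"
  shows "(\<lambda>z. ereal \<bar>z $ i - c\<bar>) \<in> (trop_rat :: (real^'n \<Rightarrow> ereal) set)"
proof -
  have "(\<lambda>z::real^'n. ereal \<bar>z $ i - c\<bar>) = tplus (ttimes (tconst (ereal (-c))) (Xvar i)) (ttimes (tconst (ereal c)) (\<lambda>x. ereal (- x $ i)))"
    by (auto simp: tplus_def ttimes_def tconst_def Xvar_def abs_if max_def)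
  also have "\<dots> \<in> trop_rat"
    by (intro tplus_rat[OF E] ttimes_rat[OF E] const_rat Xvar_rat Xinv_rat) (auto simp: TT_def)
  finally show ?thesis .
qed

lemma sumabs_rat:
  fixes E :: "(real^'n::finite \<Rightarrow> ereal) rel"
  assumes E: "trop_congruence E" and S: "finite S"
  shows "(\<lambda>z. ereal (\<Sum>i\<in>S. \<bar>z $ i - x $ i\<bar>)) \<in> (trop_rat :: (real^'n \<Rightarrow> ereal) set)"
  using S
proof (induction S rule: finite_induct)
  case empty
  have "(\<lambda>z::real^'n. ereal (\<Sum>i\<in>{}. \<bar>z $ i - x $ i\<bar>)) = tconst 0" by (simp add: tconst_def zero_ereal_def)
  moreover have "tconst 0 \<in> trop_rat" by (rule const_rat) (simp add: TT_def)
  ultimately show ?case by simp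
next
  case (insert j S)
  have "(\<lambda>z::real^'n. ereal (\<Sum>i\<in>insert j S. \<bar>z $ i - x $ i\<bar>)) = ttimes (\<lambda>z. ereal \<bar>z $ j - x $ j\<bar>) (\<lambda>z. ereal (\<Sum>i\<in>S. \<bar>z $ i - x $ i\<bar>))"
    using insert by (simp add: ttimes_def)
  then show ?case using ttimes_rat[OF E abs_rat[OF E] insert(3)] by simp
qed



locale tsetup =
  fixes E :: "(real^'n::finite \<Rightarrow> ereal) rel"
    and F :: "(real^'m::finite \<Rightarrow> ereal) rel"
    and \<psi> :: "(real^'n \<Rightarrow> ereal) set \<Rightarrow> (real^'m \<Rightarrow> ereal) set"
  assumes E: "trop_congruence E"
    and F: "trop_congruence F"
    and hom: "talg_hom E F \<psi>"
begin

lemma eqE: "equiv trop_rat E" using E unfolding trop_congruence_def by blast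
lemma eqF: "equiv trop_rat F" using F unfolding trop_congruence_def by blast

definition ev where "ev f y = class_eval (\<psi> (E``{f})) y"
definition phi where "phi y = treal (ttheta E \<psi> y)"
definition good where "good f \<longleftrightarrow> (\<forall>y\<in>cvar F. ev f y = f (phi y))"

lemma psi_class: "f \<in> trop_rat \<Longrightarrow> \<psi> (E``{f}) \<in> trop_rat // F"
  using hom unfolding talg_hom_def by (blast intro: quotientI)

lemma psi_rep: assumes "f \<in> trop_rat" obtains u where "u \<in> \<psi> (E``{f})" "u \<in> trop_rat"
  using in_quotient_imp_non_empty[OF eqF psi_class[OF assms]]
    in_quotient_imp_subset[OF eqF psi_class[OF assms]] by blast

lemma ev_rep: "f \<in> trop_rat \<Longrightarrow> u \<in> \<psi> (E``{f}) \<Longrightarrow> y \<in> cvar F \<Longrightarrow> ev f y = u y"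
  unfolding ev_def by (rule class_eval_eq[OF F psi_class])

lemma eval_F: "u \<in> trop_rat \<Longrightarrow> y \<in> cvar F \<Longrightarrow> class_eval (F``{u}) y = u y"
  by (rule class_eval_eq[OF F]) (auto intro: quotientI cong_refl[OF F])

lemma ev_plus:
  assumes f: "f \<in> trop_rat" and g: "g \<in> trop_rat" and y: "y \<in> cvar F"
  shows "ev (tplus f g) y = max (ev f y) (ev g y)"
proof -
  obtain u where u: "u \<in> \<psi> (E``{f})" "u \<in> trop_rat" using psi_rep[OF f] .
  obtain v where v: "v \<in> \<psi> (E``{g})" "v \<in> trop_rat" using psi_rep[OF g] .
  have "\<psi> (E``{tplus f g}) = F``{tplus u v}" using hom f g u v unfolding talg_hom_def by blast
  then have "ev (tplus f g) y = tplus u v y"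
    unfolding ev_def using eval_F[OF tplus_rat[OF F u(2) v(2)] y] by simp
  then show ?thesis using ev_rep[OF f u(1) y] ev_rep[OF g v(1) y] by (simp add: tplus_def)
qed

lemma ev_times:
  assumes f: "f \<in> trop_rat" and g: "g \<in> trop_rat" and y: "y \<in> cvar F"
  shows "ev (ttimes f g) y = ev f y + ev g y"
proof -
  obtain u where u: "u \<in> \<psi> (E``{f})" "u \<in> trop_rat" using psi_rep[OF f] .
  obtain v where v: "v \<in> \<psi> (E``{g})" "v \<in> trop_rat" using psi_rep[OF g] .
  have "\<psi> (E``{ttimes f g}) = F``{ttimes u v}" using hom f g u v unfolding talg_hom_def by blast
  then have "ev (ttimes f g) y = ttimes u v y"
    unfolding ev_def using eval_F[OF ttimes_rat[OF F u(2) v(2)] y] by simp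
  then show ?thesis using ev_rep[OF f u(1) y] ev_rep[OF g v(1) y] by (simp add: ttimes_def)
qed

lemma ev_const: "c \<in> TT \<Longrightarrow> y \<in> cvar F \<Longrightarrow> ev (tconst c) y = c"
proof -
  assume c: "c \<in> TT" and y: "y \<in> cvar F"
  have "\<psi> (E``{tconst c}) = F``{tconst c}" using hom c unfolding talg_hom_def by blast
  then show ?thesis unfolding ev_def using eval_F[OF const_rat[OF c] y] by (simp add: tconst_def)
qed

lemma class_mem: "A \<in> trop_rat // F \<Longrightarrow> u \<in> A \<Longrightarrow> A = F``{u}"
  by (metis quotientE equiv_class_eq[OF eqF] Image_singleton_iff)

lemma theta_nth: "ttheta E \<psi> y $ i = ev (Xvar i) y"
  by (simp add: ttheta_def ev_def)

lemma ev_X_fin: assumes y: "y \<in> cvar F" shows "ereal (real_of_ereal (ev (Xvar i) y)) = ev (Xvar i) y"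
proof -
  have "ttimes (Xvar i) (\<lambda>x. ereal (- x $ i)) = tconst 0"
    by (simp add: ttimes_def Xvar_def tconst_def fun_eq_iff zero_ereal_def)
  then have "ev (ttimes (Xvar i) (\<lambda>x. ereal (- x $ i))) y = 0"
    using ev_const[of 0, OF _ y] by (simp add: TT_def)
  then have "ev (Xvar i) y + ev (\<lambda>x. ereal (- x $ i)) y = 0"
    using ev_times[OF Xvar_rat Xinv_rat y] by simp
  then show ?thesis by (cases "ev (Xvar i) y"; cases "ev (\<lambda>x. ereal (- x $ i)) y") auto
qed

lemma theta_temb: "y \<in> cvar F \<Longrightarrow> ttheta E \<psi> y = temb (phi y)"
  by (simp add: vec_eq_iff temb_def phi_def treal_def theta_nth ev_X_fin)

lemma good_Xvar: "good (Xvar i)"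
  unfolding good_def
proof
  fix y assume y: "y \<in> cvar F"
  have "Xvar i (phi y) = ereal (real_of_ereal (ev (Xvar i) y))"
    by (simp add: Xvar_def phi_def treal_def theta_nth)
  then show "ev (Xvar i) y = Xvar i (phi y)" using ev_X_fin[OF y] by simp
qed

lemma good_const: "c \<in> TT \<Longrightarrow> good (tconst c)"
  unfolding good_def
proof
  fix y assume "c \<in> TT" "y \<in> cvar F"
  then have "ev (tconst c) y = c" by (rule ev_const)
  then show "ev (tconst c) y = tconst c (phi y)" by (simp add: tconst_def)
qed

lemma good_plus: "f \<in> trop_rat \<Longrightarrow> g \<in> trop_rat \<Longrightarrow> good f \<Longrightarrow> good g \<Longrightarrow> good (tplus f g)"
  unfolding good_def
proof
  fix y assume a: "f \<in> trop_rat" "g \<in> trop_rat" "\<forall>y\<in>cvar F. ev f y = f (phi y)" "\<forall>y\<in>cvar F. ev g y = g (phi y)" and y: "y \<in> cvar F"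
  have "ev (tplus f g) y = max (ev f y) (ev g y)" by (rule ev_plus[OF a(1,2) y])
  then show "ev (tplus f g) y = tplus f g (phi y)" using a y by (simp add: tplus_def)
qed

lemma good_times: "f \<in> trop_rat \<Longrightarrow> g \<in> trop_rat \<Longrightarrow> good f \<Longrightarrow> good g \<Longrightarrow> good (ttimes f g)"
  unfolding good_def
proof
  fix y assume a: "f \<in> trop_rat" "g \<in> trop_rat" "\<forall>y\<in>cvar F. ev f y = f (phi y)" "\<forall>y\<in>cvar F. ev g y = g (phi y)" and y: "y \<in> cvar F"
  have "ev (ttimes f g) y = ev f y + ev g y" by (rule ev_times[OF a(1,2) y])
  then show "ev (ttimes f g) y = ttimes f g (phi y)" using a y by (simp add: ttimes_def)
qed

lemma good_lin: "(\<lambda>x. ereal (real k * x $ i)) \<in> trop_rat \<and> good (\<lambda>x. ereal (real k * x $ i))"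
proof (induction k)
  case 0
  have "(\<lambda>x::real^'n. ereal (real 0 * x $ i)) = tconst 0" by (simp add: tconst_def fun_eq_iff zero_ereal_def)
  then show ?case using const_rat[of 0] good_const[of 0] by (simp add: TT_def)
next
  case (Suc k)
  have "(\<lambda>x::real^'n. ereal (real (Suc k) * x $ i)) = ttimes (Xvar i) (\<lambda>x. ereal (real k * x $ i))"
    by (simp add: ttimes_def Xvar_def fun_eq_iff algebra_simps)
  then show ?case using Suc ttimes_rat[OF E Xvar_rat] good_times[OF Xvar_rat _ good_Xvar] by simp
qed

lemma good_mono: "finite S \<Longrightarrow> (\<lambda>x. ereal (\<Sum>i\<in>S. real (a i) * x $ i)) \<in> trop_rat \<and> good (\<lambda>x. ereal (\<Sum>i\<in>S. real (a i) * x $ i))"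
proof (induction S rule: finite_induct)
  case empty
  have "(\<lambda>x::real^'n. ereal (\<Sum>i\<in>{}. real (a i) * x $ i)) = tconst 0" by (simp add: tconst_def fun_eq_iff zero_ereal_def)
  then show ?case using const_rat[of 0] good_const[of 0] by (simp add: TT_def)
next
  case (insert j S)
  have "(\<lambda>x::real^'n. ereal (\<Sum>i\<in>insert j S. real (a i) * x $ i)) = ttimes (\<lambda>x. ereal (real (a j) * x $ j)) (\<lambda>x. ereal (\<Sum>i\<in>S. real (a i) * x $ i))"
    using insert by (simp add: ttimes_def fun_eq_iff)
  then show ?case using insert good_lin[of "a j" j] ttimes_rat[OF E] good_times by simp
qed

lemma good_term: "(\<lambda>x. ereal (tterm p x)) \<in> trop_rat \<and> good (\<lambda>x. ereal (tterm p x))"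
proof (cases p)
  case (Pair a c)
  have "(\<lambda>x::real^'n. ereal (tterm p x)) = ttimes (tconst (ereal c)) (\<lambda>x. ereal (\<Sum>i\<in>UNIV. real (a i) * x $ i))"
    by (simp add: Pair tterm_def ttimes_def tconst_def fun_eq_iff)
  moreover have "ereal c \<in> TT" by (simp add: TT_def)
  moreover note m = good_mono[of UNIV a]
  moreover have "tconst (ereal c) \<in> (trop_rat :: (real^'n \<Rightarrow> ereal) set)" by (rule const_rat) (simp add: TT_def)
  ultimately show ?thesis using good_const[of "ereal c"] ttimes_rat[OF E] good_times by simp
qed

lemma good_tpoly: "finite P \<Longrightarrow> P \<noteq> {} \<Longrightarrow> (\<lambda>x. ereal (tpoly P x)) \<in> trop_rat \<and> good (\<lambda>x. ereal (tpoly P x))"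
proof (induction P rule: finite_ne_induct)
  case (singleton p)
  then show ?case using good_term[of p] by (simp add: tpoly_single)
next
  case (insert p P)
  have "(\<lambda>x::real^'n. ereal (tpoly (insert p P) x)) = tplus (\<lambda>x. ereal (tterm p x)) (\<lambda>x. ereal (tpoly P x))"
    using insert by (simp add: tpoly_insert tplus_def fun_eq_iff)
  then show ?case using insert good_term[of p] tplus_rat[OF E] good_plus by simp
qed

lemma good_all: assumes f: "f \<in> trop_rat" shows "good f"
  using f
proof (cases rule: rat_cases)
  case 1
  have "f = tconst (-\<infinity>)" using 1 by (simp add: tconst_def)
  then show ?thesis using good_const by (simp add: TT_def)
next
  case (2 P Q)
  note p = good_tpoly[OF 2(1,2)] and q = good_tpoly[OF 2(3,4)]
  have "ttimes f (\<lambda>x. ereal (tpoly Q x)) = (\<lambda>x. ereal (tpoly P x))"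
    by (simp add: 2(5) ttimes_def fun_eq_iff)
  show ?thesis unfolding good_def
  proof
    fix y assume y: "y \<in> cvar F"
    have "ev f y + ev (\<lambda>x. ereal (tpoly Q x)) y = ev (\<lambda>x. ereal (tpoly P x)) y"
      using ev_times[OF f conjunct1[OF q] y] \<open>ttimes f _ = _\<close> by simp
    then have "ev f y + ereal (tpoly Q (phi y)) = ereal (tpoly P (phi y))"
      using p q y unfolding good_def by simp
    then have "ev f y = ereal (tpoly P (phi y) - tpoly Q (phi y))"
      by (cases "ev f y") auto
    then show "ev f y = f (phi y)" by (simp add: 2(5))
  qed
qed

lemma phi_V: assumes y: "y \<in> cvar F" shows "phi y \<in> cvar E"
  unfolding cvar_def
proof (clarify)
  fix f g assume fg: "(f, g) \<in> E"
  then have fr: "f \<in> trop_rat" and gr: "g \<in> trop_rat" using cong_sub[OF E] by auto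
  have "E``{f} = E``{g}" using equiv_class_eq[OF eqE fg] .
  then have "ev f y = ev g y" by (simp add: ev_def)
  then show "f (phi y) = g (phi y)" using good_all[OF fr] good_all[OF gr] y unfolding good_def by simp
qed

lemma cont_theta: "continuous_on UNIV (ttheta E \<psi>)"
  unfolding ttheta_def class_eval_def
proof (rule continuous_on_vec_lambda)
  fix i
  have "(SOME u. u \<in> \<psi> (E``{Xvar i})) \<in> \<psi> (E``{Xvar i})"
    using psi_rep[OF Xvar_rat] by (metis someI)
  then have "(SOME u. u \<in> \<psi> (E``{Xvar i})) \<in> trop_rat"
    using in_quotient_imp_subset[OF eqF psi_class[OF Xvar_rat]] by blast
  then show "continuous_on UNIV (\<lambda>x. (SOME u. u \<in> \<psi> (E``{Xvar i})) x)"
    using cont_rat by simp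
qed

lemma cont_phi: "continuous_on UNIV phi"
  unfolding phi_def[abs_def] treal_def ttheta_def class_eval_def
proof (rule continuous_on_vec_lambda)
  fix i
  have "(SOME u. u \<in> \<psi> (E``{Xvar i})) \<in> \<psi> (E``{Xvar i})"
    using psi_rep[OF Xvar_rat] by (metis someI)
  then have "(SOME u. u \<in> \<psi> (E``{Xvar i})) \<in> trop_rat"
    using in_quotient_imp_subset[OF eqF psi_class[OF Xvar_rat]] by blast
  then show "continuous_on UNIV (\<lambda>x. real_of_ereal ((\<chi> i. (SOME u. u \<in> \<psi> (E``{Xvar i})) x) $ i))"
    using cont_rat_real by simp
qed

end


theorem theorem3p15:
  fixes E :: "(real^'n::finite \<Rightarrow> ereal) rel"
    and F :: "(real^'m::finite \<Rightarrow> ereal) rel"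
    and \<psi> :: "(real^'n \<Rightarrow> ereal) set \<Rightarrow> (real^'m \<Rightarrow> ereal) set"
  assumes E: "trop_congruence E"
    and F: "trop_congruence F"
    and hom: "talg_hom E F \<psi>"
  defines "V \<equiv> cvar E" and "W \<equiv> cvar F" and "\<theta> \<equiv> ttheta E \<psi>"
  shows
    "(\<forall>f\<in>trop_rat. \<forall>y\<in>W.
        class_eval (\<psi> (E `` {f})) y = class_eval (E `` {f}) (treal (\<theta> y)) \<and>
        class_eval (E `` {f}) (treal (\<theta> y)) = f (treal (\<theta> y))) \<and>
     \<theta> ` W \<subseteq> temb ` V \<and>
     continuous_on W \<theta> \<and>
     (\<psi> ` (trop_rat // E) = trop_rat // F \<longrightarrow>
           inj_on \<theta> W \<and> (\<exists>g. homeomorphism W (\<theta> ` W) \<theta> g) \<and>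
           closedin (top_of_set (temb ` V)) (\<theta> ` W)) \<and>
     (inj_on \<psi> (trop_rat // E) \<longrightarrow> F = cong_of W \<longrightarrow>
           closedin (top_of_set (range temb)) (\<theta> ` W) \<longrightarrow> temb ` V \<subseteq> \<theta> ` W) \<and>
     (bij_betw \<psi> (trop_rat // E) (trop_rat // F) \<longrightarrow> F = cong_of W \<longrightarrow>
           (\<exists>g. homeomorphism W (temb ` V) \<theta> g))"
proof -
  interpret t: tsetup E F \<psi> using E F hom by (rule tsetup.intro)
  have thphi: "treal (\<theta> y) = t.phi y" for y by (simp add: t.phi_def \<theta>_def)
  have thtemb: "\<theta> y = temb (t.phi y)" if "y \<in> W" for y
    using t.theta_temb that by (simp add: \<theta>_def W_def)
  have phiV: "t.phi y \<in> V" if "y \<in> W" for y using t.phi_V that by (simp add: V_def W_def)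
  have P1: "\<forall>f\<in>(trop_rat :: (real^'n \<Rightarrow> ereal) set). \<forall>y\<in>W.
        class_eval (\<psi> (E `` {f})) y = class_eval (E `` {f}) (treal (\<theta> y)) \<and>
        class_eval (E `` {f}) (treal (\<theta> y)) = f (treal (\<theta> y))"
  proof (intro ballI)
    fix f :: "real^'n \<Rightarrow> ereal" and y assume f: "f \<in> trop_rat" and y: "y \<in> W"
    have g: "t.ev f y = f (t.phi y)" using t.good_all[OF f] y unfolding t.good_def W_def by blast
    have c: "class_eval (E `` {f}) (t.phi y) = f (t.phi y)"
      using class_eval_eq[OF E quotientI[OF f] _ phiV[OF y, unfolded V_def]] cong_refl[OF E f] by blast
    show "class_eval (\<psi> (E `` {f})) y = class_eval (E `` {f}) (treal (\<theta> y)) \<and>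
        class_eval (E `` {f}) (treal (\<theta> y)) = f (treal (\<theta> y))"
      using g c unfolding thphi t.ev_def by simp
  qed
  have P2: "\<theta> ` W \<subseteq> temb ` V" using thtemb phiV by auto
  have P3: "continuous_on W \<theta>" unfolding \<theta>_def by (rule continuous_on_subset[OF t.cont_theta]) simp
  have P4: "inj_on \<theta> W \<and> (\<exists>g. homeomorphism W (\<theta> ` W) \<theta> g) \<and>
           closedin (top_of_set (temb ` V)) (\<theta> ` W)" if surj: "\<psi> ` (trop_rat // E) = trop_rat // F"
  proof -
    have "\<exists>g. g \<in> trop_rat \<and> \<psi> (E``{g}) = F``{Xvar j}" for j
    proof -
      have "F``{Xvar j} \<in> \<psi> ` (trop_rat // E)" using surj quotientI[OF Xvar_rat] by simp
      then obtain A where A: "A \<in> trop_rat // E" "\<psi> A = F``{Xvar j}" by blast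
      then show ?thesis by (metis quotientE)
    qed
    then obtain gs where gs: "\<And>j. gs j \<in> trop_rat" "\<And>j. \<psi> (E``{gs j}) = F``{Xvar j}" by metis
    define G where "G x = (\<chi> j. real_of_ereal (gs j x))" for x
    have Gphi: "G (t.phi y) = y" if y: "y \<in> W" for y
    proof -
      have "gs j (t.phi y) = ereal (y $ j)" for j
      proof -
        have "gs j (t.phi y) = t.ev (gs j) y" using t.good_all[OF gs(1)] y unfolding t.good_def W_def by simp
        also have "\<dots> = class_eval (F``{Xvar j}) y" by (simp add: t.ev_def gs(2))
        also have "\<dots> = Xvar j y" using t.eval_F[OF Xvar_rat] y by (simp add: W_def)
        finally show ?thesis by (simp add: Xvar_def)
      qed
      then show ?thesis by (simp add: G_def vec_eq_iff)
    qed
    have contG: "continuous_on UNIV G"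
      unfolding G_def[abs_def] by (intro continuous_on_vec_lambda cont_rat_real gs(1))
    have Ginv: "(G \<circ> treal) (\<theta> y) = y" if "y \<in> W" for y using Gphi that by (simp add: thphi)
    have inj: "inj_on \<theta> W" by (rule inj_on_inverseI[of _ "G \<circ> treal"]) (rule Ginv)
    have sub: "\<theta> ` W \<subseteq> range temb" using thtemb by auto
    have homeo: "homeomorphism W (\<theta> ` W) \<theta> (G \<circ> treal)"
      unfolding homeomorphism_def
    proof (intro conjI ballI)
      show "\<theta> ` W = \<theta> ` W" ..
      show "(G \<circ> treal) ` \<theta> ` W = W"
      proof
        show "(G \<circ> treal) ` \<theta> ` W \<subseteq> W" using Ginv by auto
        show "W \<subseteq> (G \<circ> treal) ` \<theta> ` W"
        proof
          fix y assume "y \<in> W"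
          then show "y \<in> (G \<circ> treal) ` \<theta> ` W" using Ginv[of y] by (metis imageI)
        qed
      qed
      show "continuous_on W \<theta>" by (rule P3)
      show "continuous_on (\<theta> ` W) (G \<circ> treal)"
        by (rule continuous_on_compose[OF continuous_on_subset[OF cont_treal sub] continuous_on_subset[OF contG]]) simp
      show "(G \<circ> treal) (\<theta> x) = x" if "x \<in> W" for x using Ginv that .
      show "\<theta> ((G \<circ> treal) y) = y" if "y \<in> \<theta> ` W" for y using that Ginv by auto
    qed
    define C where "C = {x. x \<in> V \<and> G x \<in> W \<and> t.phi (G x) = x}"
    have imC: "\<theta> ` W = temb ` C"
    proof
      show "\<theta> ` W \<subseteq> temb ` C"
      proof
        fix z assume "z \<in> \<theta> ` W"
        then obtain y where y: "y \<in> W" "z = \<theta> y" by blast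
        then have "t.phi y \<in> C" using phiV Gphi by (simp add: C_def)
        then show "z \<in> temb ` C" using y thtemb by auto
      qed
      show "temb ` C \<subseteq> \<theta> ` W"
      proof
        fix z assume "z \<in> temb ` C"
        then obtain x where x: "x \<in> C" "z = temb x" by blast
        then have "z = \<theta> (G x)" "G x \<in> W" using thtemb by (auto simp: C_def)
        then show "z \<in> \<theta> ` W" by blast
      qed
    qed
    have closedC: "closed C"
    proof -
      have "C = V \<inter> (G -` W) \<inter> {x. (t.phi \<circ> G) x = id x}" by (auto simp: C_def)
      moreover have "closed V" using closed_cvar[OF E] by (simp add: V_def)
      moreover have "closed (G -` W)"
        using continuous_closed_vimage[OF closed_cvar[OF F], of G] contG continuous_on_eq_continuous_at[of UNIV G]
        by (simp add: W_def)
      moreover have "closed {x. (t.phi \<circ> G) x = id x}"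
        by (intro closed_Collect_eq continuous_on_id continuous_on_compose contG continuous_on_subset[OF t.cont_phi]) (simp_all add: id_def continuous_on_id)
      ultimately show ?thesis by (simp add: closed_Int)
    qed
    have "closedin (top_of_set (temb ` V)) (\<theta> ` W)"
      unfolding imC by (rule closedin_subset_trans[OF closed_temb[OF closedC]]) (auto simp: C_def)
    then show ?thesis using inj homeo by blast
  qed
  have P5: "temb ` V \<subseteq> \<theta> ` W" if inj: "inj_on \<psi> (trop_rat // E)" and FW: "F = cong_of W"
     and cl: "closedin (top_of_set (range temb)) (\<theta> ` W)"
  proof
    fix z assume "z \<in> temb ` V"
    then obtain x where x: "x \<in> V" "z = temb x" by blast
    define C where "C = t.phi ` W"
    have imC: "\<theta> ` W = temb ` C" unfolding C_def using thtemb by (auto simp: image_iff)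
    have closedC: "closed C" using temb_closed cl imC by metis
    show "z \<in> \<theta> ` W"
    proof (rule ccontr)
      assume "z \<notin> \<theta> ` W"
      then have "x \<notin> C" using imC x by auto
      then have "x \<in> - C" by simp
      then obtain e where e: "e > 0" "ball x e \<subseteq> - C"
        using closedC open_contains_ball[of "- C"] by (auto simp: closed_def)
      define d :: "real^'n \<Rightarrow> ereal" where "d = (\<lambda>z. ereal (\<Sum>i\<in>UNIV. \<bar>z $ i - x $ i\<bar>))"
      have dr: "d \<in> trop_rat" unfolding d_def by (rule sumabs_rat[OF E finite])
      define f where "f = tplus (tconst (ereal e)) d"
      have fr: "f \<in> trop_rat" unfolding f_def
        by (intro tplus_rat[OF E] const_rat dr) (simp add: TT_def)
      have dge: "d w \<ge> ereal e" if "w \<in> C" for w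
      proof -
        have "w \<notin> ball x e" using e that by blast
        then have "e \<le> dist x w" by simp
        also have "\<dots> = norm (w - x)" by (simp add: dist_norm norm_minus_commute)
        also have "\<dots> \<le> (\<Sum>i\<in>UNIV. \<bar>(w - x) $ i\<bar>)" by (rule norm_le_l1_cart)
        finally show ?thesis by (simp add: d_def)
      qed
      have evfd: "t.ev f y = t.ev d y" if y: "y \<in> W" for y
      proof -
        have "t.ev f y = f (t.phi y)" "t.ev d y = d (t.phi y)"
          using t.good_all[OF fr] t.good_all[OF dr] y unfolding t.good_def W_def by auto
        moreover have "f (t.phi y) = d (t.phi y)"
          using dge[of "t.phi y"] y by (simp add: f_def tplus_def tconst_def C_def max_def)
        ultimately show ?thesis by simp
      qed
      obtain u where u: "u \<in> \<psi> (E``{f})" "u \<in> trop_rat" using t.psi_rep[OF fr] .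
      obtain v where v: "v \<in> \<psi> (E``{d})" "v \<in> trop_rat" using t.psi_rep[OF dr] .
      have "\<forall>y\<in>W. u y = v y"
        using evfd t.ev_rep[OF fr u(1)] t.ev_rep[OF dr v(1)] by (simp add: W_def)
      then have "(u, v) \<in> F" using u v FW by (simp add: cong_of_def)
      then have "F``{u} = F``{v}" by (rule equiv_class_eq[OF t.eqF])
      then have "\<psi> (E``{f}) = \<psi> (E``{d})"
        using t.class_mem[OF t.psi_class[OF fr] u(1)] t.class_mem[OF t.psi_class[OF dr] v(1)] by simp
      then have "E``{f} = E``{d}" using inj_onD[OF inj _ quotientI[OF fr] quotientI[OF dr]] by blast
      then have fd: "(f, d) \<in> E" by (rule eq_equiv_class[OF _ t.eqE dr])
      have "\<forall>(f,g)\<in>E. f x = g x" using x(1) by (simp add: V_def cvar_def)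
      then have "case (f, d) of (f, g) \<Rightarrow> f x = g x" using fd by (rule bspec)
      then have "f x = d x" by simp
      moreover have "d x = 0" by (simp add: d_def zero_ereal_def)
      moreover have "f x = ereal e" using e(1) \<open>d x = 0\<close> by (simp add: f_def tplus_def tconst_def max_def zero_ereal_def)
      ultimately show False using e(1) by (simp add: zero_ereal_def)
    qed
  qed
  have P6: "\<exists>g. homeomorphism W (temb ` V) \<theta> g"
    if b: "bij_betw \<psi> (trop_rat // E) (trop_rat // F)" and FW: "F = cong_of W"
  proof -
    have s: "\<psi> ` (trop_rat // E) = trop_rat // F" and i: "inj_on \<psi> (trop_rat // E)"
      using b by (auto simp: bij_betw_def)
    note p4 = P4[OF s]
    have "closedin (top_of_set (range temb)) (temb ` V)"
      using closed_temb[OF closed_cvar[OF E]] by (simp add: V_def)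
    then have "closedin (top_of_set (range temb)) (\<theta> ` W)"
      using p4 by (intro closedin_trans[OF _ \<open>closedin (top_of_set (range temb)) (temb ` V)\<close>]) simp
    then have "temb ` V \<subseteq> \<theta> ` W" using P5[OF i FW] by blast
    then have "\<theta> ` W = temb ` V" using P2 by blast
    moreover obtain g where "homeomorphism W (\<theta> ` W) \<theta> g" using p4 by blast
    ultimately show ?thesis by auto
  qed
  show ?thesis
    apply (intro conjI impI)
         apply (rule P1)
        apply (rule P2)
       apply (rule P3)
      apply (use P4 in blast)
     apply (use P4 in blast)
    apply (use P4 in blast)
     apply (rule P5, assumption+)
    apply (rule P6, assumption+)
    done
qed

end
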